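(* Let $n\ge 2$ be an integer and define $f_n(x)=\frac{(n-x)^{n-1}}{e^{n-x}(n-1)!}$ for $x\le n$ and $f_n(x)=0$ for $x>n$. Then: (i) $f_n$ is unimodal in $x$ with maximum value $f_n(1)$ (attained at $x=1$), and $f_n(1)\sim \frac{1}{\sqrt{2\pi n}}$ as $n\to\infty$; (ii) for every real $x\ge0$, $f_n(1+x)\le f_n(1-x)$; (iii) for every real $z\ge0$ there is a unique real number $b=b(n,z)$ with $0\le b\le z$ and $f_n(1-z)=f_n(1+z-b)$.
   Context: $f_n$ is the density of $X_1+\cdots+X_n$ where the $X_i$ are independent with density $e^{x-1}$ for $x\le1$ and $0$ for $x>1$. *)

theory Defs
  imports "HOL-Analysis.Analysis" "HOL-Library.Landau_Symbols"
begin

definition fdens :: "nat \<Rightarrow> real \<Rightarrow> real" where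
  "fdens n x = (if x \<le> real n
     then (real n - x) ^ (n - 1) / (exp (real n - x) * fact (n - 1))
     else 0)"

end

theory Submission
  imports Defs
begin


definition gg :: "nat \<Rightarrow> real \<Rightarrow> real" where "gg m t = t ^ m / exp t"

lemma gg_deriv: "m \<ge> 1 \<Longrightarrow> (gg m has_real_derivative (t ^ (m - 1) * (real m - t) / exp t)) (at t)"
proof -
  assume m: "m \<ge> 1"
  have e: "gg m = (\<lambda>t. t ^ m * exp (- t))" by (auto simp: gg_def exp_minus field_simps)
  have "((\<lambda>t. t ^ m * exp (- t)) has_real_derivative (real m * t ^ (m - 1) * exp (-t) + t ^ m * (exp (- t) * (- 1)))) (at t)"
    by (auto intro!: derivative_eq_intros)
  moreover have "t ^ m = t * t ^ (m - 1)" using m by (metis Suc_diff_le diff_Suc_1 power_Suc)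
  ultimately show ?thesis unfolding e by (simp add: exp_minus field_simps)
qed

lemma gg_mvt:
  assumes "m \<ge> 1" "u < t"
  shows "\<exists>\<xi>. u < \<xi> \<and> \<xi> < t \<and> gg m t - gg m u = (t - u) * (\<xi> ^ (m - 1) * (real m - \<xi>) / exp \<xi>)"
  using MVT2[OF assms(2), of "gg m" "\<lambda>t. t ^ (m - 1) * (real m - t) / exp t"] gg_deriv[OF assms(1)]
  by blast

lemma gg_strict_inc:
  assumes "m \<ge> 1" "0 \<le> u" "u < t" "t \<le> real m"
  shows "gg m u < gg m t"
proof -
  obtain \<xi> where x: "u < \<xi>" "\<xi> < t" "gg m t - gg m u = (t - u) * (\<xi> ^ (m - 1) * (real m - \<xi>) / exp \<xi>)"
    using gg_mvt[OF assms(1,3)] by blast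
  have "0 < (t - u) * (\<xi> ^ (m - 1) * (real m - \<xi>) / exp \<xi>)"
    using x assms by (intro mult_pos_pos divide_pos_pos) auto
  then show ?thesis using x by simp
qed

lemma gg_strict_dec:
  assumes "m \<ge> 1" "real m \<le> u" "u < t"
  shows "gg m t < gg m u"
proof -
  obtain \<xi> where x: "u < \<xi>" "\<xi> < t" "gg m t - gg m u = (t - u) * (\<xi> ^ (m - 1) * (real m - \<xi>) / exp \<xi>)"
    using gg_mvt[OF assms(1,3)] by blast
  have "\<xi> > real m" using x assms by linarith
  then have "\<xi> > 0" using assms by linarith
  have "\<xi> ^ (m - 1) * (real m - \<xi>) < 0"
    using \<open>\<xi> > real m\<close> \<open>\<xi> > 0\<close> by (intro mult_pos_neg) auto
  then have "\<xi> ^ (m - 1) * (real m - \<xi>) / exp \<xi> < 0"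
    by (rule divide_neg_pos) simp
  then have "(t - u) * (\<xi> ^ (m - 1) * (real m - \<xi>) / exp \<xi>) < 0"
    using x by (intro mult_pos_neg) auto
  then show ?thesis using x by simp
qed

lemma fdens_gg: "x \<le> real n \<Longrightarrow> fdens n x = gg (n - 1) (real n - x) / fact (n - 1)"
  by (simp add: fdens_def gg_def)

lemma fdens_nonneg: "fdens n x \<ge> 0"
  by (simp add: fdens_def)

lemma fdens_pos: "x < real n \<Longrightarrow> fdens n x > 0"
  by (simp add: fdens_def)

lemma fdens_zero: "n \<ge> 2 \<Longrightarrow> x \<ge> real n \<Longrightarrow> fdens n x = 0"
  by (auto simp: fdens_def)

lemma fdens_alt: "n \<ge> 2 \<Longrightarrow> fdens n x = (max (real n - x) 0) ^ (n - 1) / (exp (real n - x) * fact (n - 1))"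
  by (auto simp: fdens_def max_def)

lemma fdens_cont: "n \<ge> 2 \<Longrightarrow> continuous_on S (fdens n)"
proof -
  assume n: "n \<ge> 2"
  have "continuous_on S (\<lambda>x. (max (real n - x) 0) ^ (n - 1) / (exp (real n - x) * fact (n - 1)))"
  proof (rule continuous_on_divide)
    have c0: "continuous_on S (\<lambda>x. real n - x)"
      by (rule continuous_on_diff[OF continuous_on_const continuous_on_id])
    show "continuous_on S (\<lambda>x. max (real n - x) 0 ^ (n - 1))"
      by (rule continuous_on_power[OF continuous_on_max[OF c0 continuous_on_const]])
    show "continuous_on S (\<lambda>x. exp (real n - x) * fact (n - 1))"
      by (rule continuous_on_mult[OF continuous_on_exp[OF c0] continuous_on_const])
    show "\<forall>x\<in>S. exp (real n - x) * fact (n - 1) \<noteq> (0::real)" by simp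
  qed
  moreover have "fdens n = (\<lambda>x. (max (real n - x) 0) ^ (n - 1) / (exp (real n - x) * fact (n - 1)))"
    by (rule ext) (rule fdens_alt[OF n])
  ultimately show ?thesis by (simp only:)
qed

lemma fdens_inc:
  assumes "n \<ge> 2" "x < y" "y \<le> 1"
  shows "fdens n x < fdens n y"
proof -
  have "gg (n - 1) (real n - x) < gg (n - 1) (real n - y)"
    using assms by (intro gg_strict_dec) (auto simp: of_nat_diff)
  moreover have "x \<le> real n" "y \<le> real n" using assms by auto
  ultimately show ?thesis
    by (simp only: fdens_gg) (rule divide_strict_right_mono, simp_all)
qed

lemma fdens_dec:
  assumes "n \<ge> 2" "1 \<le> x" "x < y" "x < real n"
  shows "fdens n y < fdens n x"
proof (cases "y \<le> real n")
  case True
  have "gg (n - 1) (real n - y) < gg (n - 1) (real n - x)"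
    using assms True by (intro gg_strict_inc) (auto simp: of_nat_diff)
  moreover have "x \<le> real n" "y \<le> real n" using assms True by auto
  ultimately show ?thesis
    by (simp only: fdens_gg) (rule divide_strict_right_mono, simp_all)
next
  case False
  then show ?thesis using assms fdens_pos[of x n] fdens_zero[of n y] by auto
qed

lemma fdens_dec':
  assumes "n \<ge> 2" "1 \<le> x" "x \<le> y"
  shows "fdens n y \<le> fdens n x"
proof (cases "x < y \<and> x < real n")
  case True then show ?thesis using fdens_dec[OF assms(1,2)] by (simp add: less_imp_le)
next
  case False
  then consider "x = y" | "x \<ge> real n" using assms by linarith
  then show ?thesis
  proof cases
    case 2 then show ?thesis using assms fdens_zero[of n y] fdens_zero[of n x] by auto
  qed simp
qed

lemma fdens_max: "n \<ge> 2 \<Longrightarrow> fdens n x \<le> fdens n 1"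
proof -
  assume n: "n \<ge> 2"
  consider "x < 1" | "x = 1" | "x > 1" by linarith
  then show ?thesis
  proof cases
    case 1 then show ?thesis using fdens_inc[OF n, of x 1] by simp
  next
    case 3 then show ?thesis using fdens_dec'[OF n, of 1 x] by simp
  qed simp
qed


lemma H_nonneg:
  fixes m x :: real
  assumes "0 \<le> x" "x < m"
  shows "m * ln (m - x) - (m - x) \<le> m * ln (m + x) - (m + x)"
proof -
  define H where "H s = m * ln (m + s) - m * ln (m - s) - 2 * s" for s
  have "H 0 \<le> H x"
  proof (rule deriv_nonneg_imp_mono[of 0 x H "\<lambda>s. m / (m + s) + m / (m - s) - 2"])
    fix s assume s: "s \<in> {0..x}"
    then have p: "m + s > 0" "m - s > 0" using assms by auto
    have "(H has_real_derivative (m * (1 / (m + s)) - m * (- 1 / (m - s)) - 2)) (at s)"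
      unfolding H_def using p by (auto intro!: derivative_eq_intros simp: divide_simps)
    then show "(H has_real_derivative (m / (m + s) + m / (m - s) - 2)) (at s)"
      by simp
    have "2 * ((m + s) * (m - s)) \<le> m * (m - s) + m * (m + s)"
      by (simp add: algebra_simps)
    moreover have gen: "0 \<le> m / p + m / q - 2" if "p > 0" "q > 0" "2 * (p * q) \<le> m * q + m * p" for p q :: real
      using that by (simp add: field_simps)
    ultimately show "0 \<le> m / (m + s) + m / (m - s) - 2"
      using p by (intro gen) auto
  qed (use assms in auto)
  then show ?thesis by (simp add: H_def)
qed

lemma gg_sym:
  assumes "m \<ge> 1" "0 \<le> x" "x < real m"
  shows "gg m (real m - x) \<le> gg m (real m + x)"
proof -
  have p: "real m - x > 0" "real m + x > 0" using assms by auto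
  have "gg m t = exp (real m * ln t - t)" if "t > 0" for t
    using that by (simp add: gg_def exp_diff exp_of_nat_mult)
  with p H_nonneg[OF assms(2,3)] show ?thesis by simp
qed

lemma part2:
  assumes n: "n \<ge> 2" and x: "x \<ge> 0"
  shows "fdens n (1 + x) \<le> fdens n (1 - x)"
proof (cases "1 + x \<ge> real n")
  case True
  then show ?thesis using fdens_zero[OF n True] fdens_nonneg[of n "1 - x"] by simp
next
  case False
  have m: "real (n - 1) = real n - 1" using n by (simp add: of_nat_diff)
  have "gg (n - 1) (real (n - 1) - x) \<le> gg (n - 1) (real (n - 1) + x)"
    using False n x m by (intro gg_sym) auto
  moreover have "real (n - 1) - x = real n - (1 + x)" "real (n - 1) + x = real n - (1 - x)"
    using m by simp_all
  ultimately have "gg (n - 1) (real n - (1 + x)) \<le> gg (n - 1) (real n - (1 - x))"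
    by metis
  moreover have "1 + x \<le> real n" "1 - x \<le> real n" using False x by auto
  ultimately show ?thesis
    by (simp only: fdens_gg) (rule divide_right_mono, simp_all)
qed

lemma part3:
  assumes n: "n \<ge> 2" and z: "z \<ge> 0"
  shows "\<exists>!b. 0 \<le> b \<and> b \<le> z \<and> fdens n (1 - z) = fdens n (1 + z - b)"
proof (rule ex_ex1I)
  have c: "continuous_on {0..z} (\<lambda>b. fdens n (1 + z - b))"
    by (rule continuous_on_compose2[OF fdens_cont[OF n, of UNIV]]) (auto intro!: continuous_intros)
  have "fdens n (1 + z - 0) \<le> fdens n (1 - z)" using part2[OF n z] by simp
  moreover have "fdens n (1 - z) \<le> fdens n (1 + z - z)" using fdens_max[OF n] by simp
  ultimately show "\<exists>b. 0 \<le> b \<and> b \<le> z \<and> fdens n (1 - z) = fdens n (1 + z - b)"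
    using IVT'[of "\<lambda>b. fdens n (1 + z - b)" 0 "fdens n (1 - z)" z, OF _ _ z c] by metis
next
  fix b1 b2
  assume b1: "0 \<le> b1 \<and> b1 \<le> z \<and> fdens n (1 - z) = fdens n (1 + z - b1)"
     and b2: "0 \<le> b2 \<and> b2 \<le> z \<and> fdens n (1 - z) = fdens n (1 + z - b2)"
  have pos: "fdens n (1 - z) > 0" using n z by (intro fdens_pos) auto
  have lt: "1 + z - b < real n" if "0 \<le> b \<and> b \<le> z \<and> fdens n (1 - z) = fdens n (1 + z - b)" for b
  proof (rule ccontr)
    assume "\<not> ?thesis"
    then have "fdens n (1 + z - b) = 0" using fdens_zero[OF n] by simp
    then show False using that pos by simp
  qed
  show "b1 = b2"
  proof (rule ccontr)
    assume ne: "b1 \<noteq> b2"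
    show False
    proof (cases "b1 < b2")
      case True
      have "fdens n (1 + z - b1) < fdens n (1 + z - b2)"
        using fdens_dec[OF n, of "1 + z - b2" "1 + z - b1"] True b2 lt[OF b2] by auto
      then show False using b1 b2 by simp
    next
      case False
      then have "b2 < b1" using ne by simp
      have "fdens n (1 + z - b2) < fdens n (1 + z - b1)"
        using fdens_dec[OF n, of "1 + z - b1" "1 + z - b2"] \<open>b2 < b1\<close> b1 lt[OF b1] by auto
      then show False using b1 b2 by simp
    qed
  qed
qed


lemma ln_lower: fixes t :: real assumes "t \<ge> 0" shows "2 * t / (2 + t) \<le> ln (1 + t)"
proof -
  have "(\<lambda>s. ln (1 + s) - 2 * s / (2 + s)) 0 \<le> (\<lambda>s. ln (1 + s) - 2 * s / (2 + s)) t"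
  proof (rule deriv_nonneg_imp_mono[of 0 t _ "\<lambda>s. 1 / (1 + s) - 4 / (2 + s)^2"])
    fix s :: real assume s: "s \<in> {0..t}"
    then have "1 + s > 0" "2 + s > 0" by auto
    then show "((\<lambda>s. ln (1 + s) - 2 * s / (2 + s)) has_real_derivative (1 / (1 + s) - 4 / (2 + s)^2)) (at s)"
    proof -
      assume a: "1 + s > 0" "2 + s > 0"
      have "((\<lambda>s. ln (1 + s) - 2 * s / (2 + s)) has_real_derivative (1 / (1 + s) - (2 * (2 + s) - 2 * s) / ((2 + s) * (2 + s)))) (at s)"
        using a by (auto intro!: derivative_eq_intros simp: power2_eq_square)
      moreover have "(2 * (2 + s) - 2 * s) / ((2 + s) * (2 + s)) = 4 / (2 + s)^2"
        by (simp add: power2_eq_square algebra_simps)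
      ultimately show ?thesis by simp
    qed
    have gen: "0 \<le> 1 / p - 4 / q^2" if "p > 0" "q > 0" "4 * p \<le> q^2" for p q :: real
      using that by (simp add: field_simps)
    have "4 * (1 + s) \<le> (2 + s)^2" by (simp add: power2_eq_square algebra_simps)
    then show "0 \<le> 1 / (1 + s) - 4 / (2 + s)^2"
      using \<open>1 + s > 0\<close> \<open>2 + s > 0\<close> by (intro gen) auto
  qed (use assms in auto)
  then show ?thesis by simp
qed

lemma ln_upper: fixes t :: real assumes "t \<ge> 0" shows "ln (1 + t) \<le> t - t^2 / 2 + t^3 / 3"
proof -
  have "(\<lambda>s. s - s^2 / 2 + s^3 / 3 - ln (1 + s)) 0 \<le> (\<lambda>s. s - s^2 / 2 + s^3 / 3 - ln (1 + s)) t"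
  proof (rule deriv_nonneg_imp_mono[of 0 t _ "\<lambda>s. 1 - s + s^2 - 1 / (1 + s)"])
    fix s :: real assume s: "s \<in> {0..t}"
    then have "1 + s > 0" by auto
    then show "((\<lambda>s. s - s^2 / 2 + s^3 / 3 - ln (1 + s)) has_real_derivative (1 - s + s^2 - 1 / (1 + s))) (at s)"
      by (auto intro!: derivative_eq_intros simp: field_simps power2_eq_square)
    have "1 \<le> (1 - s + s^2) * (1 + s)" using s by (simp add: power2_eq_square algebra_simps)
    then show "0 \<le> 1 - s + s^2 - 1 / (1 + s)"
      using \<open>1 + s > 0\<close> by (simp add: field_simps)
  qed (use assms in auto)
  then show ?thesis by simp
qed

definition ss :: "nat \<Rightarrow> real" where
  "ss m = ln (fact m) - (real m + 1/2) * ln (real m) + real m"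

definition aa :: "nat \<Rightarrow> real" where
  "aa m = fact m * exp (real m) / (real m ^ m * sqrt (real m))"

lemma aa_ss: assumes "m \<ge> 1" shows "aa m = exp (ss m)"
proof -
  have mp: "real m > 0" using assms by simp
  have "exp ((real m + 1/2) * ln (real m)) = real m powr (real m + 1/2)"
    using mp by (simp add: powr_def)
  also have "\<dots> = real m ^ m * sqrt (real m)"
    using mp by (simp add: powr_add powr_realpow powr_half_sqrt)
  finally have e: "exp ((real m + 1/2) * ln (real m)) = real m ^ m * sqrt (real m)" .
  have "exp (ss m) = fact m * exp (real m) / exp ((real m + 1/2) * ln (real m))"
    unfolding ss_def by (simp add: exp_diff exp_add)
  then show ?thesis unfolding e aa_def by simp
qed

lemma ss_diff: assumes "m \<ge> 1"
  shows "ss m - ss (Suc m) = (real m + 1/2) * ln (1 + 1 / real m) - 1"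
proof -
  have mp: "real m > 0" using assms by simp
  have A: "ss (Suc m) = ln (fact m) + ln (real m + 1) - (real m + 3/2) * ln (real m + 1) + real m + 1"
  proof -
    have "ln (fact (Suc m) :: real) = ln (fact m) + ln (real m + 1)"
      by (simp only: fact_Suc of_nat_Suc ln_mult) (simp add: ln_mult add.commute)
    then show ?thesis unfolding ss_def by (simp add: algebra_simps)
  qed
  have B: "ln (1 + 1 / real m) = ln (real m + 1) - ln (real m)"
  proof -
    have "1 + 1 / real m = (real m + 1) / real m" using mp by (simp add: field_simps)
    then show ?thesis using mp by (simp add: ln_div)
  qed
  show ?thesis unfolding A B by (simp add: ss_def algebra_simps)
qed

lemma ss_diff_bounds: assumes "m \<ge> 1"
  shows "0 \<le> ss m - ss (Suc m)" "ss m - ss (Suc m) \<le> 1 / (4 * real m ^ 2)"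
proof -
  have mp: "real m > 0" and m1: "real m \<ge> 1" using assms by auto
  let ?t = "1 / real m"
  have t: "?t \<ge> 0" using mp by simp
  have "(real m + 1/2) * (2 * ?t / (2 + ?t)) = 1"
    using mp by (simp add: field_simps)
  moreover have "(real m + 1/2) * (2 * ?t / (2 + ?t)) \<le> (real m + 1/2) * ln (1 + ?t)"
    using ln_lower[OF t] mp by (intro mult_left_mono) auto
  ultimately show "0 \<le> ss m - ss (Suc m)" using ss_diff[OF assms] by simp
  have "(real m + 1/2) * ln (1 + ?t) \<le> (real m + 1/2) * (?t - ?t^2 / 2 + ?t^3 / 3)"
    using ln_upper[OF t] mp by (intro mult_left_mono) auto
  also have "\<dots> = 1 + 1 / (12 * real m ^ 2) + 1 / (6 * real m ^ 3)"
    using mp by (simp add: field_simps power2_eq_square power3_eq_cube)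
  also have "\<dots> \<le> 1 + 1 / (4 * real m ^ 2)"
  proof -
    have "1 / (6 * real m ^ 3) \<le> 1 / (6 * real m ^ 2)"
      using mp m1 by (intro divide_left_mono mult_left_mono) (auto simp: power2_eq_square power3_eq_cube)
    moreover have "1 / (12 * real m ^ 2) + 1 / (6 * real m ^ 2) = 1 / (4 * real m ^ 2)"
      using mp by (simp add: field_simps)
    ultimately show ?thesis by linarith
  qed
  finally show "ss m - ss (Suc m) \<le> 1 / (4 * real m ^ 2)" using ss_diff[OF assms] by simp
qed

lemma ss_lower: "ss (Suc k) \<ge> 1/2 + 1 / (2 * real (Suc k))"
proof (induction k)
  case 0
  then show ?case by (simp add: ss_def)
next
  case (Suc k)
  define m where "m = Suc k"
  have mp: "real m \<ge> 1" "m \<ge> 1" by (simp_all add: m_def)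
  have "1 / (2 * real m) - 1 / (4 * real m ^ 2) \<ge> 1 / (2 * (real m + 1))"
  proof -
    have "1 / (2 * real m) - 1 / (4 * real m ^ 2) = (2 * real m - 1) / (4 * real m ^ 2)"
      using mp by (simp add: field_simps power2_eq_square)
    moreover have "1 / (2 * (real m + 1)) \<le> (2 * real m - 1) / (4 * real m ^ 2)"
      using mp by (simp add: field_simps power2_eq_square)
    ultimately show ?thesis by simp
  qed
  moreover have "ss m \<ge> 1/2 + 1 / (2 * real m)" using Suc.IH by (simp add: m_def)
  moreover have "ss m - ss (Suc m) \<le> 1 / (4 * real m ^ 2)" by (rule ss_diff_bounds(2)[OF mp(2)])
  ultimately have "ss (Suc m) \<ge> 1/2 + 1 / (2 * (real m + 1))" by linarith
  then show ?case by (simp add: m_def)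
qed

lemma aa_conv: "\<exists>C. C > 0 \<and> aa \<longlonglongrightarrow> C"
proof -
  define S where "S k = ss (Suc k)" for k
  have "decseq S" unfolding S_def
    by (rule decseq_SucI) (use ss_diff_bounds(1) in force)
  moreover have "\<forall>k. 1/2 \<le> S k"
  proof
    fix k
    have "1/2 + 1 / (2 * real (Suc k)) \<le> ss (Suc k)" by (rule ss_lower)
    moreover have "0 \<le> 1 / (2 * real (Suc k))" by simp
    ultimately show "1/2 \<le> S k" unfolding S_def by linarith
  qed
  ultimately obtain L where L: "S \<longlonglongrightarrow> L" by (rule decseq_convergent)
  have "(\<lambda>k. exp (S k)) \<longlonglongrightarrow> exp L" by (intro tendsto_intros L)
  moreover have "(\<lambda>k. exp (S k)) = (\<lambda>k. aa (Suc k))"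
    by (auto simp: S_def aa_ss)
  ultimately have "(\<lambda>k. aa (Suc k)) \<longlonglongrightarrow> exp L" by simp
  then have "aa \<longlonglongrightarrow> exp L" by (rule LIMSEQ_imp_Suc)
  then show ?thesis by (intro exI[of _ "exp L"]) simp
qed


lemma wal_alg:
  fixes F G Q a y b :: real
  assumes "F > 0" "G > 0" "a > 0" "y > 0" "b > 0"
  shows "(Q * F^2 / G)^2 / a * (4 * y^2 / (a * b)) = (4 * Q * (y * F)^2 / ((2 * y) * a * G))^2 / b"
  using assms by (simp add: field_simps power2_eq_square)

lemma wallis_eq:
  "(\<Prod>k=1..m. (4 * real k ^ 2) / (4 * real k ^ 2 - 1)) = (4 ^ m * fact m ^ 2 / fact (2 * m)) ^ 2 / (2 * real m + 1)"
proof (induction m)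
  case 0
  then show ?case by simp
next
  case (Suc m)
  have f2: "(fact (2 * Suc m) :: real) = (2 * (1 + real m)) * (2 * real m + 1) * fact (2 * m)"
    by (simp add: algebra_simps)
  have f1: "(fact (Suc m) :: real) = (1 + real m) * fact m" by simp
  have f3: "2 * real (Suc m) + 1 = 2 * real m + 3" by simp
  have f4: "(4::real) ^ Suc m = 4 * 4 ^ m" by simp
  have d: "4 * (1 + real m) ^ 2 - 1 = (2 * real m + 1) * (2 * real m + 3)"
    by (simp add: power2_eq_square algebra_simps)
  have "(\<Prod>k=1..Suc m. (4 * real k ^ 2) / (4 * real k ^ 2 - 1))
      = (\<Prod>k=1..m. (4 * real k ^ 2) / (4 * real k ^ 2 - 1)) * ((4 * (1 + real m) ^ 2) / (4 * (1 + real m) ^ 2 - 1))"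
    by (simp add: prod.nat_ivl_Suc')
  also have "\<dots> = (4 ^ m * fact m ^ 2 / fact (2 * m)) ^ 2 / (2 * real m + 1) * ((4 * (1 + real m) ^ 2) / ((2 * real m + 1) * (2 * real m + 3)))"
    by (simp only: Suc.IH d)
  also have "\<dots> = (4 * 4 ^ m * ((1 + real m) * fact m) ^ 2 / ((2 * (1 + real m)) * (2 * real m + 1) * fact (2 * m))) ^ 2 / (2 * real m + 3)"
    by (rule wal_alg) auto
  also have "\<dots> = (4 ^ Suc m * fact (Suc m) ^ 2 / fact (2 * Suc m)) ^ 2 / (2 * real (Suc m) + 1)"
    unfolding f1 f2 f3 f4 ..
  finally show ?case .
qed

lemma alg_ratio:
  fixes F G E P s t Q m :: real
  assumes "F > 0" "G > 0" "E > 0" "P > 0" "s > 0" "t > 0" "m > 0" "s ^ 2 = m" "t ^ 2 = 2 * m"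
  shows "(F * E / (P * s)) ^ 4 / (G * E ^ 2 / (Q * P ^ 2 * t)) ^ 2 = 2 * Q ^ 2 * F ^ 4 / (G ^ 2 * m)"
proof -
  have s4: "s ^ 4 = m ^ 2" using assms(8) by (metis power2_eq_square power_mult numeral_Bit0 mult_2 power_add)
  have 1: "(F * E / (P * s)) ^ 4 = F ^ 4 * E ^ 4 / (P ^ 4 * m ^ 2)"
    by (simp add: power_divide power_mult_distrib s4)
  have 2: "(G * E ^ 2 / (Q * P ^ 2 * t)) ^ 2 = G ^ 2 * E ^ 4 / (Q ^ 2 * P ^ 4 * (2 * m))"
    by (simp add: power_divide power_mult_distrib assms(9) flip: power_mult)
  have gen: "a * b / (c * d) / (e * b / (f * c * g)) = a * f * g / (d * e)" if "b > 0" "c > 0" "d > 0" "e > 0" "f \<noteq> 0" "g > 0"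
    for a b c d e f g :: real using that by (simp add: field_simps)
  show ?thesis
  proof (cases "Q = 0")
    case False
    have "F ^ 4 * E ^ 4 / (P ^ 4 * m ^ 2) / (G ^ 2 * E ^ 4 / (Q ^ 2 * P ^ 4 * (2 * m))) = E ^ 4 * Q ^ 2 * (2 * m) / (m ^ 2 * G ^ 2) * F ^ 4 / E ^ 4"
      using gen[of "E^4" "P^4" "m^2" "G^2" "Q^2" "2*m" "F^4"] assms False by (simp add: mult_ac)
    also have "\<dots> = 2 * Q ^ 2 * F ^ 4 / (G ^ 2 * m)" using assms by (simp add: power2_eq_square field_simps)
    finally show ?thesis unfolding 1 2 .
  qed (simp add: 1 2)
qed
lemma alg2: fixes Q F G a m :: real assumes "G > 0" "a > 0" "m > 0"
  shows "2 * Q ^ 2 * F ^ 4 / (G ^ 2 * m) = 2 * ((Q * F ^ 2 / G) ^ 2 / a) * (a / m)"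
proof -
  have "(Q * F ^ 2 / G) ^ 2 = Q ^ 2 * F ^ 4 / G ^ 2"
    by (simp add: power_divide power_mult_distrib flip: power_mult)
  then show ?thesis using assms by (simp add: field_simps)
qed

lemma aa_ratio:
  assumes "m \<ge> 1"
  shows "aa m ^ 4 / aa (2 * m) ^ 2 = 2 * (\<Prod>k=1..m. (4 * real k ^ 2) / (4 * real k ^ 2 - 1)) * ((2 * real m + 1) / real m)"
proof -
  have mp: "real m > 0" using assms by simp
  have e1: "exp (real (2 * m)) = exp (real m) ^ 2"
    by (simp add: exp_of_nat_mult[symmetric])
  have "real (2 * m) ^ (2 * m) = (2 * real m) ^ (2 * m)" by simp
  also have "\<dots> = 2 ^ (2 * m) * real m ^ (2 * m)" by (rule power_mult_distrib)
  also have "(2::real) ^ (2 * m) = 4 ^ m" by (simp add: power_mult)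
  also have "real m ^ (2 * m) = (real m ^ m) ^ 2" by (simp add: power_mult[symmetric] mult.commute)
  finally have e2: "real (2 * m) ^ (2 * m) = 4 ^ m * (real m ^ m) ^ 2" .
  have a2: "aa (2 * m) = fact (2 * m) * exp (real m) ^ 2 / (4 ^ m * (real m ^ m) ^ 2 * sqrt (real (2 * m)))"
    unfolding aa_def e1 e2 ..
  have "aa m ^ 4 / aa (2 * m) ^ 2 = 2 * (4 ^ m) ^ 2 * fact m ^ 4 / (fact (2 * m) ^ 2 * real m)"
    unfolding a2 aa_def[of m] using mp
    by (intro alg_ratio) auto
  also have "\<dots> = 2 * ((4 ^ m * fact m ^ 2 / fact (2 * m)) ^ 2 / (2 * real m + 1)) * ((2 * real m + 1) / real m)"
    using mp by (intro alg2) auto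
  finally show ?thesis by (simp only: wallis_eq)
qed
lemma aa_lim: "aa \<longlonglongrightarrow> sqrt (2 * pi)"
proof -
  obtain C where C: "C > 0" "aa \<longlonglongrightarrow> C" using aa_conv by blast
  have "(aa \<circ> (\<lambda>m. 2 * m)) \<longlonglongrightarrow> C"
    by (rule LIMSEQ_subseq_LIMSEQ[OF C(2)]) (auto simp: strict_mono_def)
  then have "(\<lambda>m. aa (2 * m)) \<longlonglongrightarrow> C" by (simp add: comp_def)
  then have L1: "(\<lambda>m. aa m ^ 4 / aa (2 * m) ^ 2) \<longlonglongrightarrow> C ^ 4 / C ^ 2"
    using C by (intro tendsto_intros) auto
  have q: "(\<lambda>m. 2 + 1 / real m) \<longlonglongrightarrow> 2 + 0"
    by (intro tendsto_intros)
  have "eventually (\<lambda>m. 2 + 1 / real m = (2 * real m + 1) / real m) sequentially"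
    using eventually_ge_at_top[of "1::nat"] by eventually_elim (simp add: field_simps)
  with q have q2: "(\<lambda>m. (2 * real m + 1) / real m) \<longlonglongrightarrow> 2"
    using Lim_transform_eventually by fastforce
  have L2: "(\<lambda>m. 2 * (\<Prod>k=1..m. (4 * real k ^ 2) / (4 * real k ^ 2 - 1)) * ((2 * real m + 1) / real m)) \<longlonglongrightarrow> 2 * (pi / 2) * 2"
    by (intro tendsto_intros wallis q2)
  have "eventually (\<lambda>m. 2 * (\<Prod>k=1..m. (4 * real k ^ 2) / (4 * real k ^ 2 - 1)) * ((2 * real m + 1) / real m) = aa m ^ 4 / aa (2 * m) ^ 2) sequentially"
    using eventually_ge_at_top[of "1::nat"] by eventually_elim (simp add: aa_ratio)
  with L2 have "(\<lambda>m. aa m ^ 4 / aa (2 * m) ^ 2) \<longlonglongrightarrow> 2 * (pi / 2) * 2"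
    using Lim_transform_eventually by fastforce
  with L1 have "C ^ 4 / C ^ 2 = 2 * (pi / 2) * 2" using LIMSEQ_unique by blast
  then have "C ^ 2 = 2 * pi" using C(1) by (simp add: power4_eq_xxxx power2_eq_square field_simps)
  then have "C = sqrt (2 * pi)" using C(1) by (metis abs_of_pos real_sqrt_abs)
  then show ?thesis using C(2) by simp
qed

lemma fdens1: assumes "n \<ge> 2" shows "fdens n 1 = 1 / (aa (n - 1) * sqrt (real (n - 1)))"
proof -
  define m where "m = n - 1"
  have mp: "real m > 0" and nm: "real n - 1 = real m" using assms by (auto simp: m_def of_nat_diff)
  have "aa m * sqrt (real m) = fact m * exp (real m) / real m ^ m"
    unfolding aa_def using mp by (simp add: field_simps)
  moreover have "fdens n 1 = real m ^ m / (exp (real m) * fact m)"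
    unfolding fdens_def using assms nm by (simp add: m_def)
  ultimately show ?thesis unfolding m_def[symmetric] by simp
qed

lemma part_asymp: "(\<lambda>n. fdens n 1) \<sim>[at_top] (\<lambda>n. 1 / sqrt (2 * pi * real n))"
proof (rule asymp_equivI')
  define R where "R n = sqrt (2 * pi) / aa (n - 1) * sqrt (real n / real (n - 1))" for n
  have "(\<lambda>n. sqrt (2 * pi) / aa n * sqrt (real (Suc n) / real n)) \<longlonglongrightarrow> sqrt (2 * pi) / sqrt (2 * pi) * sqrt 1"
    by (intro tendsto_intros aa_lim LIMSEQ_Suc_n_over_n) auto
  then have "(\<lambda>n. R (Suc n)) \<longlonglongrightarrow> 1" by (simp add: R_def)
  then have "R \<longlonglongrightarrow> 1" by (rule LIMSEQ_imp_Suc)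
  moreover have "eventually (\<lambda>n. R n = fdens n 1 / (1 / sqrt (2 * pi * real n))) at_top"
    using eventually_ge_at_top[of "2::nat"]
  proof eventually_elim
    case (elim n)
    have p: "real (n - 1) > 0" using elim by simp
    have "fdens n 1 / (1 / sqrt (2 * pi * real n)) = sqrt (2 * pi) * sqrt (real n) / (aa (n - 1) * sqrt (real (n - 1)))"
      using fdens1[OF elim] by (simp add: real_sqrt_mult)
    also have "\<dots> = R n" unfolding R_def using p by (simp add: real_sqrt_divide)
    finally show ?case by simp
  qed
  ultimately show "((\<lambda>n. fdens n 1 / (1 / sqrt (2 * pi * real n))) \<longlongrightarrow> 1) at_top"
    using Lim_transform_eventually by fastforce
qed

lemma part1:
  assumes n: "n \<ge> 2"
  shows "(\<forall>x y. x \<le> y \<and> y \<le> 1 \<longrightarrow> fdens n x \<le> fdens n y) \<and>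
         (\<forall>x y. 1 \<le> x \<and> x \<le> y \<longrightarrow> fdens n y \<le> fdens n x) \<and>
         (\<forall>x. fdens n x \<le> fdens n 1)"
proof (intro conjI allI impI)
  fix x y :: real assume a: "x \<le> y \<and> y \<le> 1"
  show "fdens n x \<le> fdens n y"
  proof (cases "x = y")
    case False
    then show ?thesis using fdens_inc[OF n, of x y] a by simp
  qed simp
next
  fix x y :: real assume a: "1 \<le> x \<and> x \<le> y"
  then show "fdens n y \<le> fdens n x" using fdens_dec'[OF n] by simp
next
  fix x show "fdens n x \<le> fdens n 1" using fdens_max[OF n] .
qed

theorem lemma3:
  shows "(\<forall>n::nat. n \<ge> 2 \<longrightarrow>
            (\<forall>x y. x \<le> y \<and> y \<le> 1 \<longrightarrow> fdens n x \<le> fdens n y) \<and>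
            (\<forall>x y. 1 \<le> x \<and> x \<le> y \<longrightarrow> fdens n y \<le> fdens n x) \<and>
            (\<forall>x. fdens n x \<le> fdens n 1))
       \<and> ((\<lambda>n. fdens n 1) \<sim>[at_top] (\<lambda>n. 1 / sqrt (2 * pi * real n)))
       \<and> (\<forall>n::nat. n \<ge> 2 \<longrightarrow> (\<forall>x::real. x \<ge> 0 \<longrightarrow> fdens n (1 + x) \<le> fdens n (1 - x)))
       \<and> (\<forall>n::nat. n \<ge> 2 \<longrightarrow> (\<forall>z::real. z \<ge> 0 \<longrightarrow>
            (\<exists>!b. 0 \<le> b \<and> b \<le> z \<and> fdens n (1 - z) = fdens n (1 + z - b))))"
proof (intro conjI)
  show "(\<lambda>n. fdens n 1) \<sim>[at_top] (\<lambda>n. 1 / sqrt (2 * pi * real n))" by (rule part_asymp)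
qed (use part1 part2 part3 in simp_all)

end
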